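(* Let $k\geq 2$ be an integer. If $k$ is even, then $D_{2,k}=\langle k+1,k+2,\dots,2k+1\rangle$. If $k$ is odd, then $D_{2,k}=\left\langle \frac{k+1}{2},\frac{k+1}{2}+1,\frac{k+1}{2}+2,\dots,k\right\rangle$.
   Context: For positive integers $v,b,r,k$, a $(v,b,r,k)$-configuration is a connected bipartite graph with $v$ vertices on one side, each of degree $r$, and $b$ vertices on the other side, each of degree $k$, containing no cycle of length $4$. By convention the empty graph (with $v=b=0$) is also regarded as a configuration. A tuple $(v,b,r,k)$ is configurable if a $(v,b,r,k)$-configuration exists. Let $\mathbb{N}_0=\{0,1,2,\dots\}$ and define $$D_{r,k}=\left\{d\in\mathbb{N}_0:\left(d\tfrac{k}{\gcd(r,k)},\,d\tfrac{r}{\gcd(r,k)},\,r,\,k\right)\text{ is configurable}\right\}.$$ For integers $a_1,\dots,a_l\geq 1$, $\langle a_1,\dots,a_l\rangle$ denotes the set $\{n_1a_1+\dots+n_la_l: n_1,\dots,n_l\in\mathbb{N}_0\}$. *)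

theory Defs
  imports Main
begin

text \<open>Being a set, I has no multiple edges.\<close>

definition bip_edges :: "(nat \<times> nat) set \<Rightarrow> ((nat + nat) \<times> (nat + nat)) set" where
  "bip_edges I = {(Inl p, Inr l) | p l. (p, l) \<in> I} \<union> {(Inr l, Inl p) | p l. (p, l) \<in> I}"

definition bip_connected :: "nat set \<Rightarrow> nat set \<Rightarrow> (nat \<times> nat) set \<Rightarrow> bool" where
  "bip_connected P L I \<longleftrightarrow>
     (\<forall>x \<in> Inl ` P \<union> Inr ` L. \<forall>y \<in> Inl ` P \<union> Inr ` L. (x, y) \<in> (bip_edges I)\<^sup>*)"

definition is_configuration ::
  "nat set \<Rightarrow> nat set \<Rightarrow> (nat \<times> nat) set \<Rightarrow> nat \<Rightarrow> nat \<Rightarrow> nat \<Rightarrow> nat \<Rightarrow> bool" where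
  "is_configuration P L I v b r k \<longleftrightarrow>
     finite P \<and> finite L \<and> card P = v \<and> card L = b \<and> I \<subseteq> P \<times> L \<and>
     (\<forall>p \<in> P. card {l. (p, l) \<in> I} = r) \<and>
     (\<forall>l \<in> L. card {p. (p, l) \<in> I} = k) \<and>
     \<comment> \<open>no cycle of length 4\<close>
     (\<forall>p1 p2 l1 l2. p1 \<noteq> p2 \<and> l1 \<noteq> l2 \<and> (p1, l1) \<in> I \<and> (p2, l1) \<in> I \<and>
        (p1, l2) \<in> I \<longrightarrow> (p2, l2) \<notin> I) \<and>
     bip_connected P L I"

definition configurable :: "nat \<Rightarrow> nat \<Rightarrow> nat \<Rightarrow> nat \<Rightarrow> bool" where
  "configurable v b r k \<longleftrightarrow> (\<exists>P L I. is_configuration P L I v b r k)"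

definition Dset :: "nat \<Rightarrow> nat \<Rightarrow> nat set" where
  "Dset r k = {d. configurable (d * (k div gcd r k)) (d * (r div gcd r k)) r k}"

definition gen_monoid :: "nat set \<Rightarrow> nat set" where
  "gen_monoid A = {m. \<exists>n :: nat \<Rightarrow> nat. m = (\<Sum>a\<in>A. n a * a)}"

end

theory Submission
  imports Defs
begin

lemma card2_eq:
  assumes "card e = 2" "a \<in> e" "b \<in> e" "a \<noteq> b"
  shows "e = {a,b}"
proof -
  have "finite e" using assms(1) card.infinite by fastforce
  moreover have "{a,b} \<subseteq> e" using assms by auto
  moreover have "card {a,b} = card e" using assms by simp
  ultimately show ?thesis by (metis card_subset_eq)
qed

lemma config_from_graph:
  fixes E :: "nat set set"
  assumes finE: "finite E" and edges: "\<And>e. e\<in>E \<Longrightarrow> card e = 2 \<and> e \<subseteq> {0..<n}"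
   and deg: "\<And>v. v<n \<Longrightarrow> card {e\<in>E. v\<in>e} = k"
   and path: "\<And>i. i+1<n \<Longrightarrow> {i,i+1} \<in> E" and n1: "n \<ge> 1"
  shows "configurable (card E) n 2 k"
proof -
  define enc where "enc e = Min e * n + Max e" for e :: "nat set"
  define P where "P = enc ` E"
  define L where "L = {0..<n}"
  define I where "I = {(enc e, l) | e l. e \<in> E \<and> l \<in> e}"
  have fin_e: "\<And>e. e\<in>E \<Longrightarrow> finite e" using edges card.infinite by fastforce
  have key: "e = {Min e, Max e} \<and> Max e < n" if eE: "e \<in> E" for e
  proof -
    have "card e = 2" using edges[OF eE] by blast
    then obtain a b where ab: "a \<noteq> b" "e = {a,b}" using card_2_iff by metis
    have "e = {Min e, Max e}" using ab by (cases "a \<le> b") auto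
    moreover have "Max e \<in> e" using ab by (cases "a \<le> b") auto
    ultimately show ?thesis using edges[OF eE] by auto
  qed
  have inj: "inj_on enc E"
  proof
    fix e1 e2 assume a: "e1 \<in> E" "e2 \<in> E" "enc e1 = enc e2"
    have n0: "n > 0" using n1 by simp
    have "enc e1 mod n = Max e1" "enc e1 div n = Min e1"
      using key[OF a(1)] n0 unfolding enc_def by simp_all
    moreover have "enc e2 mod n = Max e2" "enc e2 div n = Min e2"
      using key[OF a(2)] n0 unfolding enc_def by simp_all
    ultimately show "e1 = e2" using key a by metis
  qed
  have pdeg: "\<And>e. e\<in>E \<Longrightarrow> {l. (enc e, l) \<in> I} = e"
    using inj unfolding I_def by (auto dest: inj_onD)
  have ldeg: "\<And>l. {p. (p,l) \<in> I} = enc ` {e\<in>E. l\<in>e}" by (auto simp: I_def)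
  have IP: "\<And>p l. (p,l) \<in> I \<Longrightarrow> \<exists>e\<in>E. p = enc e \<and> l \<in> e" by (auto simp: I_def)
  have conf: "is_configuration P L I (card E) n 2 k"
    unfolding is_configuration_def
  proof (intro conjI)
    show "finite P" using finE P_def by simp
    show "finite L" using L_def by simp
    show "card P = card E" using card_image[OF inj] P_def by simp
    show "card L = n" using L_def by simp
    show "I \<subseteq> P \<times> L" using edges unfolding I_def P_def L_def by auto
    show "\<forall>p\<in>P. card {l. (p, l) \<in> I} = 2" using pdeg edges P_def by auto
    show "\<forall>l\<in>L. card {p. (p, l) \<in> I} = k"
    proof
      fix l assume "l \<in> L"
      have "inj_on enc {e\<in>E. l\<in>e}" by (rule inj_on_subset[OF inj]) auto
      then have "card (enc ` {e\<in>E. l\<in>e}) = card {e\<in>E. l\<in>e}" by (rule card_image)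
      moreover have "l < n" using \<open>l \<in> L\<close> L_def by simp
      ultimately show "card {p. (p, l) \<in> I} = k" unfolding ldeg using deg by simp
    qed
    show "\<forall>p1 p2 l1 l2. p1 \<noteq> p2 \<and> l1 \<noteq> l2 \<and> (p1, l1) \<in> I \<and> (p2, l1) \<in> I \<and>
        (p1, l2) \<in> I \<longrightarrow> (p2, l2) \<notin> I"
    proof (intro allI impI notI)
      fix p1 p2 l1 l2
      assume a: "p1 \<noteq> p2 \<and> l1 \<noteq> l2 \<and> (p1, l1) \<in> I \<and> (p2, l1) \<in> I \<and> (p1, l2) \<in> I"
        and b: "(p2, l2) \<in> I"
      have ne: "l1 \<noteq> l2" using a by simp
      obtain e1 where e1: "e1 \<in> E" "p1 = enc e1" using IP a by blast
      obtain e2 where e2: "e2 \<in> E" "p2 = enc e2" using IP b by blast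
      have m1: "l1 \<in> {l. (p1, l) \<in> I}" "l2 \<in> {l. (p1, l) \<in> I}" using a by simp_all
      have "l1 \<in> e1" "l2 \<in> e1" using m1 unfolding e1(2) pdeg[OF e1(1)] .
      moreover have "card e1 = 2" using edges e1(1) by blast
      ultimately have "e1 = {l1,l2}" using card2_eq ne by metis
      have m2: "l1 \<in> {l. (p2, l) \<in> I}" "l2 \<in> {l. (p2, l) \<in> I}" using a b by simp_all
      have "l1 \<in> e2" "l2 \<in> e2" using m2 unfolding e2(2) pdeg[OF e2(1)] .
      moreover have "card e2 = 2" using edges e2(1) by blast
      ultimately have "e2 = {l1,l2}" using card2_eq ne by metis
      show False using a e1 e2 \<open>e1 = {l1,l2}\<close> \<open>e2 = {l1,l2}\<close> by simp
    qed
    show "bip_connected P L I"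
      unfolding bip_connected_def
    proof (intro ballI)
      define R where "R = bip_edges I"
      have symR: "sym (R\<^sup>*)" by (rule sym_rtrancl) (auto simp: sym_def R_def bip_edges_def)
      have blk: "i < n \<Longrightarrow> (Inr 0, Inr i) \<in> R\<^sup>*" for i
      proof (induction i)
        case 0 then show ?case by simp
      next
        case (Suc i)
        have "{i, i+1} \<in> E" using path Suc by simp
        then have "(enc {i,i+1}, i) \<in> I" "(enc {i,i+1}, i+1) \<in> I"
          unfolding I_def by blast+
        then have "(Inr i, Inl (enc {i,i+1})) \<in> R" "(Inl (enc {i,i+1}), Inr (i+1)) \<in> R"
          unfolding R_def bip_edges_def by blast+
        moreover have "(Inr 0, Inr i) \<in> R\<^sup>*" using Suc by simp
        ultimately show ?case by (metis Suc_eq_plus1 rtrancl_into_rtrancl)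
      qed
      have all: "x \<in> Inl ` P \<union> Inr ` L \<Longrightarrow> (Inr 0, x) \<in> R\<^sup>*" for x
      proof -
        assume "x \<in> Inl ` P \<union> Inr ` L"
        then consider (a) e where "e \<in> E" "x = Inl (enc e)" | (b) l where "l < n" "x = Inr l"
          unfolding P_def L_def by auto
        then show ?thesis
        proof cases
          case a
          have "e \<noteq> {}" using edges a(1) by fastforce
          then obtain l where "l \<in> e" by auto
          have "e \<subseteq> {0..<n}" using edges a(1) by blast
          then have "l < n" using \<open>l \<in> e\<close> by auto
          have "(enc e, l) \<in> I" using \<open>l \<in> e\<close> a(1) unfolding I_def by blast
          then have "(Inr l, x) \<in> R" using a unfolding R_def bip_edges_def by blast
          then show ?thesis using blk \<open>l < n\<close> by (meson rtrancl_into_rtrancl)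
        next
          case b then show ?thesis using blk by simp
        qed
      qed
      fix x y assume "x \<in> Inl ` P \<union> Inr ` L" "y \<in> Inl ` P \<union> Inr ` L"
      then have "(x, Inr 0) \<in> R\<^sup>*" "(Inr 0, y) \<in> R\<^sup>*" using all symR by (auto dest: symD)
      then show "(x, y) \<in> (bip_edges I)\<^sup>*" unfolding R_def by simp
    qed
  qed
  then show ?thesis unfolding configurable_def by blast
qed


lemma handshake:
  fixes E :: "nat set set"
  assumes finE: "finite E" and edges: "\<And>e. e\<in>E \<Longrightarrow> card e = 2 \<and> e \<subseteq> {0..<n}"
   and deg: "\<And>v. v<n \<Longrightarrow> card {e\<in>E. v\<in>e} = k"
  shows "2 * card E = n * k"
proof -
  have c: "card {e\<in>E. v\<in>e} = (\<Sum>e\<in>E. if v \<in> e then 1 else 0)" for v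
    using finE by (simp add: sum.If_cases Int_def)
  have c2: "(\<Sum>v\<in>{0..<n}. if v \<in> e then 1 else (0::nat)) = 2" if "e \<in> E" for e
  proof -
    have "(\<Sum>v\<in>{0..<n}. if v \<in> e then 1 else (0::nat)) = card ({0..<n} \<inter> e)"
      by (simp add: sum.If_cases)
    also have "{0..<n} \<inter> e = e" using edges[OF that] by blast
    finally show ?thesis using edges[OF that] by simp
  qed
  have "n * k = (\<Sum>v\<in>{0..<n}. card {e\<in>E. v\<in>e})" using deg by simp
  also have "\<dots> = (\<Sum>v\<in>{0..<n}. \<Sum>e\<in>E. if v \<in> e then 1 else 0)" using c by simp
  also have "\<dots> = (\<Sum>e\<in>E. \<Sum>v\<in>{0..<n}. if v \<in> e then 1 else 0)" by (rule sum.swap)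
  also have "\<dots> = (\<Sum>e\<in>E. 2)" using c2 by simp
  finally show ?thesis by simp
qed

lemma modl: "a < n \<Longrightarrow> t < (n::nat) \<Longrightarrow> (a+t) mod n = (if a+t<n then a+t else a+t-n)"
  by (auto simp: mod_if)

lemma circulant:
  assumes k2: "k \<ge> 2" and nk: "n \<ge> k+1" and ev: "even (n*k)"
  shows "\<exists>E. finite E \<and> (\<forall>e\<in>E. card e = 2 \<and> e \<subseteq> {0..<n}) \<and> (\<forall>v<n. card{e\<in>E. v\<in>e} = k)
     \<and> (\<forall>i. i+1<n \<longrightarrow> {i,i+1}\<in>E)"
proof -
  define h where "h = k div 2"
  define T where "T = {1..h} \<union> {n-h..<n} \<union> (if odd k then {n div 2} else {})"
  define E where "E = {{i, (i+t) mod n} | i t. i<n \<and> t\<in>T}"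
  have h1: "1 \<le> h" "2*h \<le> k" "k \<le> 2*h+1" using k2 h_def by auto
  have oddn: "odd k \<Longrightarrow> even n" using ev by simp
  have oddk: "odd k \<Longrightarrow> k = 2*h+1" using h_def by presburger
  have T1: "1 \<le> t \<and> t < n" if "t\<in>T" for t
    using that h1 nk unfolding T_def by (auto split: if_splits)
  have T2: "n - t \<in> T" if "t\<in>T" for t
  proof -
    { assume "t = n div 2" "odd k"
      then have ?thesis using oddn unfolding T_def by auto }
    then show ?thesis using that h1 nk unfolding T_def by (auto split: if_splits)
  qed
  have T3: "card T = k"
  proof -
    have d1: "{1..h} \<inter> {n-h..<n} = {}" using h1 nk by auto
    have c1: "card ({1..h} \<union> {n-h..<n}) = 2*h"
      using card_Un_disjoint[OF _ _ d1] h1 nk by simp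
    show ?thesis
    proof (cases "odd k")
      case True
      have "h < n div 2" "n div 2 < n - h" using oddk[OF True] oddn[OF True] nk by auto
      then have "n div 2 \<notin> {1..h} \<union> {n-h..<n}" by auto
      then show ?thesis using c1 True oddk[OF True] unfolding T_def by simp
    next
      case False
      then show ?thesis using c1 h_def unfolding T_def by simp
    qed
  qed
  have ne: "i \<noteq> (i+t) mod n" if "i < n" "t \<in> T" for i t
    using T1[OF that(2)] modl[OF that(1)] that(1) by auto
  have finE: "finite E"
  proof (rule finite_subset[of E "Pow {0..<n}"])
    show "E \<subseteq> Pow {0..<n}" unfolding E_def using T1 by auto
  qed simp
  have edges: "\<forall>e\<in>E. card e = 2 \<and> e \<subseteq> {0..<n}"
    unfolding E_def using ne by auto
  have deg: "card{e\<in>E. v\<in>e} = k" if v: "v<n" for v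
  proof -
    have eq: "{e\<in>E. v\<in>e} = (\<lambda>t. {v, (v+t) mod n}) ` T"
    proof
      show "(\<lambda>t. {v, (v+t) mod n}) ` T \<subseteq> {e\<in>E. v\<in>e}" unfolding E_def using v by blast
      show "{e\<in>E. v\<in>e} \<subseteq> (\<lambda>t. {v, (v+t) mod n}) ` T"
      proof
        fix e assume "e \<in> {e\<in>E. v\<in>e}"
        then obtain i t where it: "e = {i, (i+t) mod n}" "i < n" "t \<in> T" "v \<in> e"
          unfolding E_def by blast
        show "e \<in> (\<lambda>t. {v, (v+t) mod n}) ` T"
        proof (cases "v = i")
          case True then show ?thesis using it by blast
        next
          case False
          then have vv: "v = (i+t) mod n" using it by auto
          have tn: "1 \<le> t" "t < n" using T1 it(3) by auto
          have "(v + (n-t)) mod n = i"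
            using vv modl[OF it(2) tn(2)] it(2) tn
            by (cases "i+t < n") (auto simp: mod_if)
          then have "e = {v, (v + (n-t)) mod n}" using it vv by auto
          then show ?thesis using T2[OF it(3)] by blast
        qed
      qed
    qed
    have inj: "inj_on (\<lambda>t. {v, (v+t) mod n}) T"
    proof
      fix t1 t2 assume a: "t1 \<in> T" "t2 \<in> T" "{v, (v+t1) mod n} = {v, (v+t2) mod n}"
      have "(v+t1) mod n \<noteq> v" "(v+t2) mod n \<noteq> v" using ne v a by metis+
      then have "(v+t1) mod n = (v+t2) mod n" using a(3) by (auto simp: doubleton_eq_iff)
      moreover have "t1 < n" "t2 < n" using T1 a(1,2) by auto
      ultimately show "t1 = t2" using modl[OF v \<open>t1 < n\<close>] modl[OF v \<open>t2 < n\<close>] v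
        by (cases "v+t1 < n"; cases "v+t2<n") (simp_all split: if_split_asm)
    qed
    show ?thesis using eq card_image[OF inj] T3 by simp
  qed
  have path: "\<forall>i. i+1<n \<longrightarrow> {i,i+1}\<in>E"
  proof (intro allI impI)
    fix i assume "i+1 < n"
    moreover have "1 \<in> T" using h1 unfolding T_def by auto
    ultimately show "{i,i+1} \<in> E" unfolding E_def by force
  qed
  show ?thesis using finE edges deg path by blast
qed


lemma nec:
  assumes "configurable v b 2 k" "b > 0"
  shows "b \<ge> k+1"
proof -
  obtain P L I where c: "is_configuration P L I v b 2 k" using assms(1) configurable_def by blast
  have finL: "finite L" and cL: "card L = b" and IPL: "I \<subseteq> P \<times> L"
    and pd: "\<And>p. p \<in> P \<Longrightarrow> card {l. (p, l) \<in> I} = 2"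
    and ld: "\<And>l. l \<in> L \<Longrightarrow> card {p. (p, l) \<in> I} = k"
    and nc: "\<And>p1 p2 l1 l2. p1 \<noteq> p2 \<Longrightarrow> l1 \<noteq> l2 \<Longrightarrow> (p1, l1) \<in> I \<Longrightarrow> (p2, l1) \<in> I \<Longrightarrow>
        (p1, l2) \<in> I \<Longrightarrow> (p2, l2) \<notin> I"
    using c unfolding is_configuration_def by blast+
  have "L \<noteq> {}" using cL assms(2) by auto
  then obtain l where l: "l \<in> L" by auto
  define S where "S = {p. (p, l) \<in> I}"
  define f where "f p = (SOME l'. (p,l') \<in> I \<and> l' \<noteq> l)" for p
  have fS: "(p, f p) \<in> I \<and> f p \<noteq> l" if "p \<in> S" for p
  proof -
    have "p \<in> P" using that IPL S_def by auto
    then have cb: "card {l'. (p, l') \<in> I} = 2" by (rule pd)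
    have "\<exists>l'. (p,l') \<in> I \<and> l' \<noteq> l"
    proof (rule ccontr)
      assume "\<not> ?thesis"
      then have "{l'. (p, l') \<in> I} \<subseteq> {l}" by auto
      then have "card {l'. (p, l') \<in> I} \<le> card {l}" by (rule card_mono[rotated]) simp
      then have "card {l'. (p, l') \<in> I} \<le> 1" by simp
      then show False using cb by simp
    qed
    then show ?thesis unfolding f_def by (rule someI_ex)
  qed
  have inj: "inj_on f S"
  proof
    fix p1 p2 assume a: "p1 \<in> S" "p2 \<in> S" "f p1 = f p2"
    show "p1 = p2"
    proof (rule ccontr)
      assume "p1 \<noteq> p2"
      moreover have "f p1 \<noteq> l" using fS a(1) by blast
      moreover have "(p1, l) \<in> I" "(p2, l) \<in> I" using a S_def by auto
      moreover have "(p1, f p1) \<in> I" "(p2, f p1) \<in> I" using fS a by metis+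
      ultimately show False using nc[of p1 p2 l "f p1"] by blast
    qed
  qed
  have sub: "f ` S \<subseteq> L - {l}" using fS IPL by blast
  have "k = card S" using ld[OF l] S_def by simp
  also have "\<dots> = card (f ` S)" using card_image[OF inj] by simp
  also have "\<dots> \<le> card (L - {l})" using card_mono[OF _ sub] finL by simp
  also have "\<dots> = b - 1" using cL l finL by simp
  finally show ?thesis using assms(2) by simp
qed

lemma empty_conf: "configurable 0 0 r k"
  unfolding configurable_def
  by (rule exI[of _ "{}"], rule exI[of _ "{}"], rule exI[of _ "{}"])
     (simp add: is_configuration_def bip_connected_def)

lemma gm_add: "m1 \<in> gen_monoid A \<Longrightarrow> m2 \<in> gen_monoid A \<Longrightarrow> m1 + m2 \<in> gen_monoid A"
proof -
  assume "m1 \<in> gen_monoid A" "m2 \<in> gen_monoid A"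
  then obtain n1 n2 where "m1 = (\<Sum>a\<in>A. n1 a * a)" "m2 = (\<Sum>a\<in>A. n2 a * a)"
    unfolding gen_monoid_def by blast
  then have "m1 + m2 = (\<Sum>a\<in>A. (n1 a + n2 a) * a)"
    by (simp add: sum.distrib distrib_right)
  then show ?thesis unfolding gen_monoid_def by (intro CollectI exI[of _ "\<lambda>a. n1 a + n2 a"])
qed

lemma gm_single: "finite A \<Longrightarrow> x \<in> A \<Longrightarrow> x \<in> gen_monoid A"
proof -
  assume f: "finite A" and x: "x \<in> A"
  have "(\<Sum>y\<in>A. (if y = x then 1 else 0) * y) = (\<Sum>y\<in>A. if y = x then y else 0)"
    by (rule sum.cong) auto
  also have "\<dots> = x" using f x by (simp add: sum.delta)
  finally have "x = (\<Sum>y\<in>A. (if y = x then 1 else 0) * y)" by simp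
  then show ?thesis unfolding gen_monoid_def by (intro CollectI exI[of _ "\<lambda>y. if y = x then 1 else 0"])
qed

lemma gm_interval:
  assumes a1: "1 \<le> a" and ab: "2*a - 1 \<le> b"
  shows "gen_monoid {a..b} = {d. d = 0 \<or> a \<le> d}"
proof
  show "gen_monoid {a..b} \<subseteq> {d. d = 0 \<or> a \<le> d}"
  proof
    fix m assume "m \<in> gen_monoid {a..b}"
    then obtain n where m: "m = (\<Sum>x\<in>{a..b}. n x * x)" unfolding gen_monoid_def by blast
    show "m \<in> {d. d = 0 \<or> a \<le> d}"
    proof (cases "m = 0")
      case False
      then have "(\<Sum>x\<in>{a..b}. n x * x) \<noteq> 0" using m by simp
      then have "\<not> (\<forall>x\<in>{a..b}. n x * x = 0)" by (simp only: sum_eq_0_iff[OF finite_atLeastAtMost] not_False_eq_True)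
      then obtain x where x: "x \<in> {a..b}" "n x * x \<noteq> 0" by blast
      have "n x * x \<le> m" unfolding m by (rule member_le_sum) (use x in auto)
      moreover have "x \<le> n x * x" using x(2) by simp
      ultimately have "a \<le> m" using x(1) by (meson atLeastAtMost_iff order_trans)
      then show ?thesis by simp
    qed simp
  qed
  show "{d. d = 0 \<or> a \<le> d} \<subseteq> gen_monoid {a..b}"
  proof
    fix d assume "d \<in> {d. d = 0 \<or> a \<le> d}"
    then consider "d = 0" | "a \<le> d" by blast
    then show "d \<in> gen_monoid {a..b}"
    proof cases
      case 1
      have "d = (\<Sum>x\<in>{a..b}. (\<lambda>_. 0) x * x)" using 1 by simp
      then show ?thesis unfolding gen_monoid_def by (intro CollectI exI[of _ "\<lambda>_. 0"])
    next
      case 2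
      then show ?thesis
      proof (induction d rule: less_induct)
        case (less d)
        show ?case
        proof (cases "d \<le> b")
          case True then show ?thesis using gm_single less.prems by auto
        next
          case False
          then have "a \<le> d - a" "d - a < d" using ab a1 by auto
          then have "d - a \<in> gen_monoid {a..b}" using less.IH by blast
          moreover have "a \<in> gen_monoid {a..b}" using gm_single ab a1 by auto
          ultimately have "(d - a) + a \<in> gen_monoid {a..b}" by (rule gm_add)
          then show ?thesis using less.prems by simp
        qed
      qed
    qed
  qed
qed

lemma exists_conf:
  assumes "k \<ge> 2" "n \<ge> k+1" "even (n*k)" "2 * v = n * k"
  shows "configurable v n 2 k"
proof -
  obtain E where E: "finite E" "\<forall>e\<in>E. card e = 2 \<and> e \<subseteq> {0..<n}" "\<forall>v<n. card{e\<in>E. v\<in>e} = k"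
     "\<forall>i. i+1<n \<longrightarrow> {i,i+1}\<in>E" using circulant[OF assms(1-3)] by blast
  have "configurable (card E) n 2 k"
    by (rule config_from_graph) (use E assms in auto)
  moreover have "2 * card E = n * k" by (rule handshake) (use E in auto)
  moreover have "card E = v" using \<open>2 * card E = n * k\<close> assms(4) by simp
  ultimately show ?thesis by simp
qed

theorem corollary1:
  fixes k :: nat
  assumes "k \<ge> 2"
  shows "(even k \<longrightarrow> Dset 2 k = gen_monoid {k+1..2*k+1}) \<and>
         (odd k \<longrightarrow> Dset 2 k = gen_monoid {(k+1) div 2..k})"
proof (intro conjI impI)
  assume ek: "even k"
  have g: "gcd 2 k = 2" using ek by (simp add: gcd_nat.absorb1)
  have "Dset 2 k = {d. d = 0 \<or> k+1 \<le> d}"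
  proof (rule set_eqI)
    fix d
    have "d \<in> Dset 2 k \<longleftrightarrow> configurable (d * (k div 2)) d 2 k" unfolding Dset_def g by simp
    also have "\<dots> \<longleftrightarrow> d = 0 \<or> k+1 \<le> d"
    proof
      assume "configurable (d * (k div 2)) d 2 k"
      then show "d = 0 \<or> k+1 \<le> d" using nec by blast
    next
      assume "d = 0 \<or> k+1 \<le> d"
      then show "configurable (d * (k div 2)) d 2 k"
      proof
        assume "d = 0" then show ?thesis using empty_conf by simp
      next
        assume "k+1 \<le> d"
        then show ?thesis using exists_conf[OF assms] ek by auto
      qed
    qed
    finally show "d \<in> Dset 2 k \<longleftrightarrow> d \<in> {d. d = 0 \<or> k+1 \<le> d}" by simp
  qed
  also have "\<dots> = gen_monoid {k+1..2*k+1}" by (rule gm_interval[symmetric]) auto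
  finally show "Dset 2 k = gen_monoid {k+1..2*k+1}" .
next
  assume ok: "odd k"
  have g: "gcd 2 k = 1" using ok by (simp add: coprime_iff_gcd_eq_1[symmetric])
  have "Dset 2 k = {d. d = 0 \<or> (k+1) div 2 \<le> d}"
  proof (rule set_eqI)
    fix d
    have "d \<in> Dset 2 k \<longleftrightarrow> configurable (d * k) (d * 2) 2 k" unfolding Dset_def g by simp
    also have "\<dots> \<longleftrightarrow> d = 0 \<or> (k+1) div 2 \<le> d"
    proof
      assume "configurable (d * k) (d * 2) 2 k"
      then have "d = 0 \<or> k+1 \<le> d * 2" using nec[of "d*k" "d*2" k] by (cases "d = 0") auto
      then show "d = 0 \<or> (k+1) div 2 \<le> d" by auto
    next
      assume "d = 0 \<or> (k+1) div 2 \<le> d"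
      then show "configurable (d * k) (d * 2) 2 k"
      proof
        assume "d = 0" then show ?thesis using empty_conf by simp
      next
        assume "(k+1) div 2 \<le> d"
        then have "k + 1 \<le> d * 2" using ok by presburger
        then show ?thesis using exists_conf[OF assms] by auto
      qed
    qed
    finally show "d \<in> Dset 2 k \<longleftrightarrow> d \<in> {d. d = 0 \<or> (k+1) div 2 \<le> d}" by simp
  qed
  also have "\<dots> = gen_monoid {(k+1) div 2..k}"
    by (rule gm_interval[symmetric]) (use assms ok in presburger)+
  finally show "Dset 2 k = gen_monoid {(k+1) div 2..k}" .
qed

end
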